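(* For all $n\in\mathbb{N}$, $\mathrm{SL}_n(\mathcal{A}(\bm{p}))=\mathrm{E}_n(\mathcal{A}(\bm{p}))$; that is, every $n\times n$ matrix over $\mathcal{A}(\bm{p})$ with determinant $\varepsilon$ is a finite product of elementary matrices.
   Context: Fix $\bm{p}:\mathbb{N}_0\to(0,\infty)$ with $\lim_{n\to\infty}\bm{p}(n)^{1/n}=\infty$. For an entire function $f$ write $f(z)=\sum_{n\ge0}\widehat f(n)z^n$. $\mathcal{A}(\bm{p})$ is the set of entire functions $f$ with $\sup_{n\ge 0}\bm{p}(n)|\widehat f(n)|<\infty$, with pointwise addition and scalar multiplication and the weighted Hadamard product $(f\ast g)(z)=\sum_{n\ge0}\bm{p}(n)\widehat f(n)\widehat g(n)z^n$; it is a commutative unital ring with unit $\varepsilon(z)=\sum_{n\ge0}\frac{z^n}{\bm{p}(n)}$. Determinants and matrix products are computed using $\ast$. $\mathrm{SL}_n(\mathcal{A}(\bm{p}))$ is the group of $n\times n$ matrices with determinant $\varepsilon$; an elementary matrix is $I_n+\alpha\mathbf{e}_{ij}$ with $i\ne j$, $\alpha\in\mathcal{A}(\bm{p})$, where $I_n$ is diagonal with entries $\varepsilon$ and $\mathbf{e}_{ij}$ has $\varepsilon$ in position $(i,j)$ and $0$ elsewhere; $\mathrm{E}_n(\mathcal{A}(\bm{p}))$ is the subgroup generated by elementary matrices. *)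

theory Defs
  imports "HOL-Analysis.Analysis" "HOL-Combinatorics.Permutations"
begin

definition coef :: "(complex \<Rightarrow> complex) \<Rightarrow> nat \<Rightarrow> complex" where
  "coef f n = (deriv ^^ n) f 0 / of_nat (fact n)"

definition Ap :: "(nat \<Rightarrow> real) \<Rightarrow> (complex \<Rightarrow> complex) set" where
  "Ap p = {f. f holomorphic_on UNIV \<and> (\<exists>B. \<forall>n. p n * norm (coef f n) \<le> B)}"

definition hmult :: "(nat \<Rightarrow> real) \<Rightarrow> (complex \<Rightarrow> complex) \<Rightarrow> (complex \<Rightarrow> complex) \<Rightarrow> (complex \<Rightarrow> complex)" where
  "hmult p f g = (\<lambda>z. \<Sum>n. of_real (p n) * coef f n * coef g n * z ^ n)"

definition eps :: "(nat \<Rightarrow> real) \<Rightarrow> complex \<Rightarrow> complex" where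
  "eps p = (\<lambda>z. \<Sum>n. z ^ n / of_real (p n))"

text \<open>Matrices of size k: entries indexed by a, b < k.\<close>
type_synonym mat = "nat \<Rightarrow> nat \<Rightarrow> (complex \<Rightarrow> complex)"

definition hprod_list :: "(nat \<Rightarrow> real) \<Rightarrow> (complex \<Rightarrow> complex) list \<Rightarrow> (complex \<Rightarrow> complex)" where
  "hprod_list p xs = foldr (hmult p) xs (eps p)"

definition hdet :: "(nat \<Rightarrow> real) \<Rightarrow> nat \<Rightarrow> mat \<Rightarrow> (complex \<Rightarrow> complex)" where
  "hdet p k M = (\<lambda>z. \<Sum>\<sigma>\<in>{\<sigma>. \<sigma> permutes {..<k}}.
      of_int (sign \<sigma>) * hprod_list p (map (\<lambda>i. M i (\<sigma> i)) [0..<k]) z)"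

definition matmul :: "(nat \<Rightarrow> real) \<Rightarrow> nat \<Rightarrow> mat \<Rightarrow> mat \<Rightarrow> mat" where
  "matmul p k M N = (\<lambda>i j z. \<Sum>l<k. hmult p (M i l) (N l j) z)"

definition idmat :: "(nat \<Rightarrow> real) \<Rightarrow> mat" where
  "idmat p = (\<lambda>a b. if a = b then eps p else (\<lambda>_. 0))"

text \<open>Elementary matrix I_k + alpha e_ij (i \<noteq> j, alpha in A(p)); here alpha * eps = alpha.\<close>
definition elementary :: "(nat \<Rightarrow> real) \<Rightarrow> nat \<Rightarrow> mat \<Rightarrow> bool" where
  "elementary p k G \<longleftrightarrow> (\<exists>i<k. \<exists>j<k. i \<noteq> j \<and> (\<exists>\<alpha>\<in>Ap p.
      \<forall>a<k. \<forall>b<k. G a b = (if a = b then eps p else if a = i \<and> b = j then \<alpha> else (\<lambda>_. 0))))"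

definition SL :: "(nat \<Rightarrow> real) \<Rightarrow> nat \<Rightarrow> mat set" where
  "SL p k = {M. (\<forall>a<k. \<forall>b<k. M a b \<in> Ap p) \<and> hdet p k M = eps p}"

definition in_E :: "(nat \<Rightarrow> real) \<Rightarrow> nat \<Rightarrow> mat \<Rightarrow> bool" where
  "in_E p k M \<longleftrightarrow> (\<exists>Gs. (\<forall>G\<in>set Gs. elementary p k G) \<and>
      (\<forall>a<k. \<forall>b<k. foldr (matmul p k) Gs (idmat p) a b = M a b))"

end

theory Submission
  imports Defs "HOL-Complex_Analysis.Cauchy_Integral_Formula" "Jordan_Normal_Form.Determinant" "Jordan_Normal_Form.Gauss_Jordan_Elimination" "Jordan_Normal_Form.Column_Operations"
begin

hide_type (open) Matrix.mat

definition bnd :: "(nat \<Rightarrow> complex) \<Rightarrow> bool" where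
  "bnd a \<longleftrightarrow> (\<exists>B. \<forall>n. cmod (a n) \<le> B)"

definition Phi :: "(nat \<Rightarrow> real) \<Rightarrow> (complex \<Rightarrow> complex) \<Rightarrow> nat \<Rightarrow> complex" where
  "Phi p f n = of_real (p n) * coef f n"

definition Psi :: "(nat \<Rightarrow> real) \<Rightarrow> (nat \<Rightarrow> complex) \<Rightarrow> complex \<Rightarrow> complex" where
  "Psi p a = (\<lambda>z. \<Sum>n. a n / of_real (p n) * z ^ n)"

lemma bnd_const[simp]: "bnd (\<lambda>_. c)"
  unfolding bnd_def by auto

lemma bnd_mult: "bnd a \<Longrightarrow> bnd b \<Longrightarrow> bnd (\<lambda>n. a n * b n)"
proof -
  assume "bnd a" "bnd b"
  then obtain A B where A: "\<And>n. cmod (a n) \<le> A" and B: "\<And>n. cmod (b n) \<le> B" unfolding bnd_def by auto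
  have "cmod (a n * b n) \<le> A * B" for n
    unfolding norm_mult by (rule mult_mono[OF A B]) (use order_trans[OF norm_ge_zero A] in auto)
  thus ?thesis unfolding bnd_def by auto
qed

lemma bnd_cmult: "bnd a \<Longrightarrow> bnd (\<lambda>n. c * a n)"
  using bnd_mult[OF bnd_const] by auto

lemma bnd_add: "bnd a \<Longrightarrow> bnd b \<Longrightarrow> bnd (\<lambda>n. a n + b n)"
proof -
  assume "bnd a" "bnd b"
  then obtain A B where A: "\<And>n. cmod (a n) \<le> A" and B: "\<And>n. cmod (b n) \<le> B" unfolding bnd_def by auto
  have "cmod (a n + b n) \<le> A + B" for n
    by (rule order_trans[OF norm_triangle_ineq add_mono[OF A B]])
  thus ?thesis unfolding bnd_def by auto
qed

lemma bnd_sum: "finite S \<Longrightarrow> (\<And>x. x \<in> S \<Longrightarrow> bnd (a x)) \<Longrightarrow> bnd (\<lambda>n. \<Sum>x\<in>S. a x n)"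
  by (induction S rule: finite_induct) (auto intro: bnd_add)

lemma bnd_prod: "finite S \<Longrightarrow> (\<And>x. x \<in> S \<Longrightarrow> bnd (a x)) \<Longrightarrow> bnd (\<lambda>n. \<Prod>x\<in>S. a x n)"
  by (induction S rule: finite_induct) (auto intro: bnd_mult)

locale PP =
  fixes p :: "nat \<Rightarrow> real"
  assumes pos: "\<And>n. p n > 0"
    and lim: "filterlim (\<lambda>n. root n (p n)) at_top sequentially"
begin

lemma pne: "(of_real (p n) :: complex) \<noteq> 0"
  using pos[of n] by auto

lemma pn0[simp]: "p n \<noteq> 0"
  using pos[of n] by auto

lemma summ_norm:
  assumes "bnd a"
  shows "summable (\<lambda>n. norm (a n / of_real (p n) * z ^ n))"
proof -
  obtain B where B: "\<And>n. cmod (a n) \<le> B" using assms unfolding bnd_def by auto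
  define r where "r = 2 * (norm z + 1)"
  have r: "r > 0" unfolding r_def by simp (use norm_ge_zero[of z] in linarith)
  have ev: "eventually (\<lambda>n. r \<le> root n (p n)) sequentially"
    using lim unfolding filterlim_at_top by auto
  have ev2: "eventually (\<lambda>n. norm (norm (a n / of_real (p n) * z ^ n)) \<le> B * (1/2) ^ n) sequentially"
    using ev eventually_ge_at_top[of 1]
  proof eventually_elim
    case (elim n)
    have pn: "root n (p n) ^ n = p n" using real_root_pow_pos[of n "p n"] pos[of n] elim by auto
    have "r ^ n \<le> root n (p n) ^ n" by (rule power_mono) (use elim r in auto)
    hence "r ^ n \<le> p n" by (simp only: pn)
    have "norm (norm (a n / of_real (p n) * z ^ n)) = cmod (a n) * (norm z ^ n / p n)"
      using pos[of n] by (simp add: norm_mult norm_divide norm_power)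
    also have "\<dots> \<le> B * (1/2) ^ n"
    proof (rule mult_mono[OF B])
      have "norm z ^ n / p n \<le> norm z ^ n / r ^ n"
        by (rule divide_left_mono) (use \<open>r ^ n \<le> p n\<close> r pos[of n] in auto)
      also have "\<dots> = (norm z / r) ^ n" by (simp add: power_divide)
      also have "\<dots> \<le> (1/2) ^ n"
        by (rule power_mono) (use r in \<open>auto simp: r_def field_simps\<close>)
      finally show "norm z ^ n / p n \<le> (1/2) ^ n" .
      show "0 \<le> B" using order_trans[OF norm_ge_zero B] .
      show "0 \<le> norm z ^ n / p n" using pos[of n] by auto
    qed
    finally show ?case .
  qed
  show ?thesis
    by (rule summable_comparison_test_ev[OF ev2]) (intro summable_mult summable_geometric, auto)
qed

lemma summ: "bnd a \<Longrightarrow> summable (\<lambda>n. a n / of_real (p n) * z ^ n)"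
  using summable_norm_cancel[OF summ_norm] by blast

lemma Psi_fps:
  assumes "bnd a"
  shows "Psi p a = eval_fps (Abs_fps (\<lambda>n. a n / of_real (p n)))"
    and "fps_conv_radius (Abs_fps (\<lambda>n. a n / of_real (p n))) = \<infinity>"
proof -
  show "Psi p a = eval_fps (Abs_fps (\<lambda>n. a n / of_real (p n)))"
    unfolding Psi_def eval_fps_def by simp
  show "fps_conv_radius (Abs_fps (\<lambda>n. a n / of_real (p n))) = \<infinity>"
    unfolding fps_conv_radius_def using summ[OF assms] by (intro conv_radius_inftyI'') simp
qed

lemma Psi_holo: "bnd a \<Longrightarrow> Psi p a holomorphic_on UNIV"
  using Psi_fps[of a] by (auto intro!: holomorphic_on_eval_fps)

lemma coef_Psi: "bnd a \<Longrightarrow> coef (Psi p a) n = a n / of_real (p n)"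
proof -
  assume a: "bnd a"
  have "Psi p a has_fps_expansion Abs_fps (\<lambda>n. a n / of_real (p n))"
    using Psi_fps[OF a] by (simp add: eval_fps_has_fps_expansion)
  from fps_nth_fps_expansion[OF this, of n] show ?thesis unfolding coef_def by simp
qed

lemma Phi_Psi: "bnd a \<Longrightarrow> Phi p (Psi p a) = a"
  unfolding Phi_def by (rule ext) (simp add: coef_Psi pne)

lemma Psi_Ap: "bnd a \<Longrightarrow> Psi p a \<in> Ap p"
proof -
  assume a: "bnd a"
  then obtain B where B: "\<And>n. cmod (a n) \<le> B" unfolding bnd_def by auto
  have "p n * cmod (coef (Psi p a) n) \<le> B" for n
    using B[of n] pos[of n] by (simp add: coef_Psi[OF a] norm_divide)
  thus ?thesis unfolding Ap_def using Psi_holo[OF a] by auto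
qed

lemma Phi_bnd: "f \<in> Ap p \<Longrightarrow> bnd (Phi p f)"
proof -
  assume "f \<in> Ap p"
  then obtain B where B: "\<And>n. p n * cmod (coef f n) \<le> B" unfolding Ap_def by auto
  have "cmod (Phi p f n) \<le> B" for n using B[of n] pos[of n] by (simp add: Phi_def norm_mult)
  thus ?thesis unfolding bnd_def by auto
qed

lemma Psi_Phi: "f \<in> Ap p \<Longrightarrow> Psi p (Phi p f) = f"
proof (rule ext)
  fix z :: complex assume f: "f \<in> Ap p"
  have "f holomorphic_on ball 0 (norm z + 1)" using f unfolding Ap_def
    by (auto intro: holomorphic_on_subset)
  from holomorphic_power_series[OF this, of z]
  have "(\<lambda>n. coef f n * z ^ n) sums f z" by (simp add: coef_def)
  moreover have "(\<lambda>n. Phi p f n / of_real (p n) * z ^ n) = (\<lambda>n. coef f n * z ^ n)"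
    by (rule ext) (simp add: Phi_def pne)
  ultimately show "Psi p (Phi p f) z = f z" unfolding Psi_def by (simp add: sums_iff)
qed

lemma hmult_Psi: "hmult p f g = Psi p (\<lambda>n. Phi p f n * Phi p g n)"
  unfolding hmult_def Psi_def Phi_def by (rule ext, rule arg_cong[where f=suminf], rule ext) (simp add: pne field_simps)

lemma eps_Psi: "eps p = Psi p (\<lambda>_. 1)"
  unfolding eps_def Psi_def by simp

lemma Psi_zero: "Psi p (\<lambda>_. 0) = (\<lambda>_. 0)"
  unfolding Psi_def by simp

lemma Psi_sum: "finite S \<Longrightarrow> (\<And>x. x \<in> S \<Longrightarrow> bnd (a x)) \<Longrightarrow>
    Psi p (\<lambda>n. \<Sum>x\<in>S. a x n) z = (\<Sum>x\<in>S. Psi p (a x) z)"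
proof -
  assume S: "finite S" "\<And>x. x \<in> S \<Longrightarrow> bnd (a x)"
  have "(\<Sum>n. \<Sum>x\<in>S. a x n / of_real (p n) * z ^ n) = (\<Sum>x\<in>S. \<Sum>n. a x n / of_real (p n) * z ^ n)"
    by (rule suminf_sum) (use S summ in auto)
  moreover have "(\<lambda>n. (\<Sum>x\<in>S. a x n) / of_real (p n) * z ^ n) = (\<lambda>n. \<Sum>x\<in>S. a x n / of_real (p n) * z ^ n)"
    by (simp add: sum_divide_distrib sum_distrib_right)
  ultimately show ?thesis unfolding Psi_def by simp
qed

lemma Psi_cmult: "bnd a \<Longrightarrow> Psi p (\<lambda>n. c * a n) z = c * Psi p a z"
proof -
  assume a: "bnd a"
  have "(\<lambda>n. c * a n / of_real (p n) * z ^ n) = (\<lambda>n. c * (a n / of_real (p n) * z ^ n))" by auto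
  thus ?thesis unfolding Psi_def using suminf_mult[OF summ[OF a, of z], of c] by simp
qed

lemma Psi_inj: "bnd a \<Longrightarrow> bnd b \<Longrightarrow> Psi p a = Psi p b \<Longrightarrow> a = b"
  using Phi_Psi by metis

end


definition fl :: "nat \<Rightarrow> ((nat \<times> nat) \<times> complex) list \<Rightarrow> complex Matrix.mat" where
  "fl n xs = foldr (\<lambda>((i,j),c) acc. addrow_mat n c i j * acc) xs (1\<^sub>m n)"

definition elemW :: "nat \<Rightarrow> (nat \<times> nat) list \<Rightarrow> complex list \<Rightarrow> complex Matrix.mat" where
  "elemW n W cs = fl n (zip W cs)"

definition validW :: "nat \<Rightarrow> (nat \<times> nat) list \<Rightarrow> bool" where
  "validW n W \<longleftrightarrow> (\<forall>(i,j)\<in>set W. i < n \<and> j < n \<and> i \<noteq> j)"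

definition mb :: "nat \<Rightarrow> complex Matrix.mat \<Rightarrow> real \<Rightarrow> bool" where
  "mb n A C \<longleftrightarrow> (\<forall>i<n. \<forall>j<n. cmod (A $$ (i,j)) \<le> C)"

lemma fl_Nil[simp]: "fl n [] = 1\<^sub>m n" unfolding fl_def by simp
lemma fl_Cons[simp]: "fl n (((i,j),c) # xs) = addrow_mat n c i j * fl n xs" unfolding fl_def by simp

lemma fl_carrier[simp]: "fl n xs \<in> carrier_mat n n"
  by (induction xs) (auto simp: fl_def)

lemma fl_dims[simp]: "dim_row (fl n xs) = n" "dim_col (fl n xs) = n"
  using fl_carrier[of n xs] unfolding carrier_mat_def by auto

lemma fl_append: "fl n (xs @ ys) = fl n xs * fl n ys"
proof (induction xs)
  case Nil thus ?case by simp
next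
  case (Cons x xs)
  obtain i j c where x: "x = ((i,j),c)" by (cases x) auto
  show ?case unfolding x using Cons
    by (simp add: assoc_mult_mat[of _ n n _ n _ n])
qed

lemma fl_det: "(\<forall>((i,j),c)\<in>set xs. i \<noteq> j) \<Longrightarrow> Determinant.det (fl n xs) = 1"
proof (induction xs)
  case Nil thus ?case by simp
next
  case (Cons x xs)
  obtain i j c where x: "x = ((i,j),c)" by (cases x) auto
  show ?case unfolding x using Cons x
    by (simp add: det_mult[of _ n _] det_addrow_mat)
qed

lemma elemW_carrier[simp]: "elemW n W cs \<in> carrier_mat n n"
  unfolding elemW_def by simp

lemma elemW_dims[simp]: "dim_row (elemW n W cs) = n" "dim_col (elemW n W cs) = n"
  unfolding elemW_def by auto

lemma elemW_det: "validW n W \<Longrightarrow> Determinant.det (elemW n W cs) = 1"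
  unfolding elemW_def validW_def
  by (rule fl_det) (auto dest: set_zip_leftD)

lemma elemW_append: "length W1 = length cs1 \<Longrightarrow>
    elemW n (W1 @ W2) (cs1 @ cs2) = elemW n W1 cs1 * elemW n W2 cs2"
  unfolding elemW_def by (simp add: fl_append)

lemma elemW_Cons[simp]: "elemW n ((i,j) # W) (c # cs) = addrow_mat n c i j * elemW n W cs"
  unfolding elemW_def by simp

lemma elemW_Nil[simp]: "elemW n [] cs = 1\<^sub>m n"
  unfolding elemW_def by simp

lemma validW_append[simp]: "validW n (W1 @ W2) \<longleftrightarrow> validW n W1 \<and> validW n W2"
  unfolding validW_def by auto

lemma addrow_mat_zero: "addrow_mat n (0::complex) k l = 1\<^sub>m n"
  by (rule eq_matI) auto

lemma elemW_zeros: "elemW n W (replicate k 0) = 1\<^sub>m n"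
proof (induction W arbitrary: k)
  case Nil thus ?case by simp
next
  case (Cons w W)
  obtain i j where w: "w = (i,j)" by (cases w) auto
  show ?case unfolding w using Cons by (cases k) (simp_all add: addrow_mat_zero elemW_def)
qed

lemma elemW_onehot:
  "distinct xs \<Longrightarrow> elemW n (map (\<lambda>i. (N,i)) xs) (map (\<lambda>i. if i = i0 then c else 0) xs)
     = (if i0 \<in> set xs then addrow_mat n c N i0 else 1\<^sub>m n)"
proof (induction xs)
  case Nil thus ?case by simp
next
  case (Cons x xs)
  show ?case
  proof (cases "x = i0")
    case True
    with Cons have "i0 \<notin> set xs" by auto
    hence "map (\<lambda>i. if i = i0 then c else 0) xs = replicate (length (map (\<lambda>i. (N,i)) xs)) 0"
      by (induction xs) auto
    with True show ?thesis by (simp add: elemW_zeros)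
  next
    case False
    with Cons show ?thesis by (simp add: addrow_mat_zero)
  qed
qed

lemma addrow_undo:
  assumes "k < n" "l < n" "k \<noteq> l" "X \<in> carrier_mat n n"
  shows "addrow_mat n (- c) k l * (addrow_mat n (c::complex) k l * X) = X"
proof -
  have "addrow_mat n (- c) k l * (addrow_mat n c k l * X) = (addrow_mat n (- c) k l * addrow_mat n c k l) * X"
    using assms by (simp add: assoc_mult_mat[of _ n n _ n _ n])
  also have "addrow_mat n (- c) k l * addrow_mat n c k l = 1\<^sub>m n"
    using addrow_mat_inv[OF assms(1-3), of "- c"] by simp
  finally show ?thesis using assms by simp
qed

lemma addrow_idx:
  assumes "X \<in> carrier_mat n n" "l < n" "i < n" "j < n"
  shows "(addrow_mat n c k l * X) $$ (i,j) = (if k = i then c * X $$ (l,j) + X $$ (i,j) else X $$ (i,j))"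
  using assms by (simp add: addrow_mat[OF assms(1,2), symmetric])

lemma addrow_carrier: "X \<in> carrier_mat n n \<Longrightarrow> addrow_mat n c k l * X \<in> carrier_mat n n"
  by (rule mult_carrier_mat[OF addrow_mat_carrier])

lemma mb_mono: "mb n A C \<Longrightarrow> C \<le> C' \<Longrightarrow> mb n A C'"
  unfolding mb_def by force

lemma mb_addrow:
  assumes "X \<in> carrier_mat n n" "l < n" "mb n X K"
  shows "mb n (addrow_mat n c k l * X) ((1 + cmod c) * K)"
  unfolding mb_def
proof (intro allI impI)
  fix i j assume ij: "i < n" "j < n"
  have K: "0 \<le> K" using assms(3) ij unfolding mb_def by (meson norm_ge_zero order_trans)
  have b1: "cmod (X $$ (l,j)) \<le> K" "cmod (X $$ (i,j)) \<le> K" using assms ij unfolding mb_def by auto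
  have "cmod (c * X $$ (l,j) + X $$ (i,j)) \<le> cmod c * K + K"
    by (rule order_trans[OF norm_triangle_ineq]) (use b1 in \<open>auto simp: norm_mult intro!: add_mono mult_left_mono\<close>)
  moreover have "K \<le> (1 + cmod c) * K" using K by (simp add: algebra_simps)
  ultimately show "cmod ((addrow_mat n c k l * X) $$ (i, j)) \<le> (1 + cmod c) * K"
  proof (cases "k = i")
    case True
    thus ?thesis using addrow_idx[OF assms(1,2) ij, of c k] \<open>cmod (c * X $$ (l,j) + X $$ (i,j)) \<le> cmod c * K + K\<close>
      by (simp add: algebra_simps)
  next
    case False
    have "cmod (X $$ (i,j)) \<le> (1 + cmod c) * K" using b1(2) \<open>K \<le> (1 + cmod c) * K\<close> by linarith
    thus ?thesis using addrow_idx[OF assms(1,2) ij, of c k] False by simp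
  qed
qed



lemma det_col_bound:
  assumes A: "A \<in> carrier_mat n n" and mbA: "mb n A C0" and C0: "1 \<le> C0" and J: "J < n"
    and d: "Determinant.det A = 1"
  shows "\<exists>i<n. 1 / (fact n * C0 ^ (n - 1)) \<le> cmod (A $$ (i,J))"
proof (rule ccontr)
  define \<delta> where "\<delta> = 1 / (fact n * C0 ^ (n - 1))"
  assume "\<not> (\<exists>i<n. 1 / (fact n * C0 ^ (n - 1)) \<le> cmod (A $$ (i,J)))"
  hence small: "\<And>i. i < n \<Longrightarrow> cmod (A $$ (i,J)) < \<delta>" unfolding \<delta>_def by force
  define \<mu> where "\<mu> = Max ((\<lambda>i. cmod (A $$ (i,J))) ` {0..<n})"
  have ne: "{0..<n} \<noteq> {}" using J by auto
  have mu_lt: "\<mu> < \<delta>" unfolding \<mu>_def using ne small by (subst Max_less_iff) auto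
  have mu_ge: "cmod (A $$ (i,J)) \<le> \<mu>" if "i < n" for i unfolding \<mu>_def using that by (intro Max_ge) auto
  have C0pos: "0 < C0" using C0 by simp
  define P where "P = {p. p permutes {0..<n}}"
  have term_bd: "cmod (signof p * (\<Prod>i = 0..<n. A $$ (i, p i))) \<le> \<mu> * C0 ^ (n - 1)" if p: "p permutes {0..<n}" for p
  proof -
    have sg: "cmod (signof p :: complex) = 1" by (simp add: sign_def)
    obtain i0 where i0: "i0 \<in> {0..<n}" "p i0 = J"
      using J permutes_image[OF p] by (metis atLeastLessThan_iff imageE zero_le)
    have pin: "p i < n" if "i < n" for i using permutes_in_image[OF p, of i] that by auto
    have "cmod (\<Prod>i = 0..<n. A $$ (i, p i)) = (\<Prod>i = 0..<n. cmod (A $$ (i, p i)))"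
      by (simp add: prod_norm)
    also have "\<dots> = cmod (A $$ (i0, p i0)) * (\<Prod>i \<in> {0..<n} - {i0}. cmod (A $$ (i, p i)))"
      by (rule prod.remove) (use i0 in auto)
    also have "\<dots> \<le> \<mu> * C0 ^ (n - 1)"
    proof (rule mult_mono)
      show "cmod (A $$ (i0, p i0)) \<le> \<mu>" using mu_ge i0 by auto
      have "(\<Prod>i \<in> {0..<n} - {i0}. cmod (A $$ (i, p i))) \<le> (\<Prod>i \<in> {0..<n} - {i0}. C0)"
        by (rule prod_mono) (use mbA pin in \<open>auto simp: mb_def\<close>)
      also have "\<dots> = C0 ^ (n - 1)" using i0 by simp
      finally show "(\<Prod>i \<in> {0..<n} - {i0}. cmod (A $$ (i, p i))) \<le> C0 ^ (n - 1)" .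
      show "0 \<le> \<mu>" using mu_ge[of J] J norm_ge_zero[of "A $$ (J,J)"] by linarith
      show "0 \<le> (\<Prod>i \<in> {0..<n} - {i0}. cmod (A $$ (i, p i)))" by (simp add: prod_nonneg)
    qed
    finally show ?thesis by (simp add: norm_mult sign_def)
  qed
  have "1 = cmod (Determinant.det A)" using d by simp
  also have "\<dots> = cmod (\<Sum>p\<in>P. signof p * (\<Prod>i = 0..<n. A $$ (i, p i)))"
    using det_def'[OF A] unfolding P_def by simp
  also have "\<dots> \<le> (\<Sum>p\<in>P. cmod (signof p * (\<Prod>i = 0..<n. A $$ (i, p i))))"
    by (rule norm_sum)
  also have "\<dots> \<le> (\<Sum>p\<in>P. \<mu> * C0 ^ (n - 1))"
    by (rule sum_mono) (use term_bd in \<open>auto simp: P_def\<close>)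
  also have "\<dots> = fact n * (\<mu> * C0 ^ (n - 1))"
    unfolding P_def by (simp add: card_permutations[of "{0..<n}" n])
  also have "\<dots> < fact n * (\<delta> * C0 ^ (n - 1))"
    using mu_lt C0pos by (intro mult_strict_left_mono mult_strict_right_mono) auto
  also have "\<dots> = 1" unfolding \<delta>_def using C0pos by simp
  finally show False by simp
qed



lemma elemW_Nil2[simp]: "elemW n W [] = 1\<^sub>m n"
  unfolding elemW_def by simp

definition RC :: "nat \<Rightarrow> nat \<Rightarrow> complex Matrix.mat \<Rightarrow> nat set \<Rightarrow> complex Matrix.mat" where
  "RC n N A S = Matrix.mat n n (\<lambda>(i,j). if i \<in> S then A $$ (i,j) - A $$ (i,N) * A $$ (N,j) else A $$ (i,j))"

lemma RC_dims[simp]: "dim_row (RC n N A S) = n" "dim_col (RC n N A S) = n"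
  unfolding RC_def by simp_all

lemma RC_carrier[simp]: "RC n N A S \<in> carrier_mat n n"
  unfolding RC_def by simp

lemma RC_idx: "i < n \<Longrightarrow> j < n \<Longrightarrow> RC n N A S $$ (i,j) = (if i \<in> S then A $$ (i,j) - A $$ (i,N) * A $$ (N,j) else A $$ (i,j))"
  unfolding RC_def by simp

lemma RC_empty: "A \<in> carrier_mat n n \<Longrightarrow> RC n N A {} = A"
  by (rule eq_matI) (auto simp: RC_idx)

lemma RC_step:
  assumes "N < n" "x \<notin> S" "N \<notin> S" "x \<noteq> N"
  shows "RC n N A S = addrow_mat n (A $$ (x,N)) x N * RC n N A (insert x S)"
proof (rule eq_matI)
  fix i j assume ij: "i < dim_row (addrow_mat n (A $$ (x,N)) x N * RC n N A (insert x S))"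
     "j < dim_col (addrow_mat n (A $$ (x,N)) x N * RC n N A (insert x S))"
  hence ij: "i < n" "j < n" by auto
  show "RC n N A S $$ (i, j) = (addrow_mat n (A $$ (x,N)) x N * RC n N A (insert x S)) $$ (i, j)"
  proof -
    have e: "(addrow_mat n (A $$ (x,N)) x N * RC n N A (insert x S)) $$ (i,j) =
      (if x = i then A $$ (x,N) * RC n N A (insert x S) $$ (N,j) + RC n N A (insert x S) $$ (i,j)
       else RC n N A (insert x S) $$ (i,j))"
      by (rule addrow_idx) (use assms ij in auto)
    have r1: "RC n N A (insert x S) $$ (N,j) = A $$ (N,j)" using RC_idx[of N n j N A "insert x S"] assms ij by simp
    have r2: "RC n N A (insert x S) $$ (i,j) = (if i \<in> insert x S then A $$ (i,j) - A $$ (i,N) * A $$ (N,j) else A $$ (i,j))"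
      by (rule RC_idx) (use ij in auto)
    have r3: "RC n N A S $$ (i,j) = (if i \<in> S then A $$ (i,j) - A $$ (i,N) * A $$ (N,j) else A $$ (i,j))"
      by (rule RC_idx) (use ij in auto)
    show ?thesis
    proof (cases "x = i")
      case True
      thus ?thesis unfolding e r1 r2 r3 using assms by simp
    next
      case False
      thus ?thesis unfolding e r2 r3 by simp
    qed
  qed
qed auto

lemma RC_induct:
  assumes "N < n" "distinct xs" "N \<notin> set xs" "set xs \<inter> S = {}" "N \<notin> S"
  shows "RC n N A S = elemW n (map (\<lambda>x. (x,N)) xs) (map (\<lambda>x. A $$ (x,N)) xs) * RC n N A (set xs \<union> S)"
  using assms(2-5)
proof (induction xs arbitrary: S)
  case Nil thus ?case by simp
next
  case (Cons x xs)
  have "RC n N A S = addrow_mat n (A $$ (x,N)) x N * RC n N A (insert x S)"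
    by (rule RC_step) (use Cons.prems assms(1) in auto)
  also have "RC n N A (insert x S) = elemW n (map (\<lambda>x. (x,N)) xs) (map (\<lambda>x. A $$ (x,N)) xs) * RC n N A (set xs \<union> insert x S)"
    by (rule Cons.IH) (use Cons.prems in auto)
  finally have "RC n N A S = addrow_mat n (A $$ (x,N)) x N * (elemW n (map (\<lambda>x. (x,N)) xs) (map (\<lambda>x. A $$ (x,N)) xs) * RC n N A (set xs \<union> insert x S))" .
  also have "\<dots> = (addrow_mat n (A $$ (x,N)) x N * elemW n (map (\<lambda>x. (x,N)) xs) (map (\<lambda>x. A $$ (x,N)) xs)) * RC n N A (set xs \<union> insert x S)"
    by (rule assoc_mult_mat[symmetric, of _ n n _ n _ n]) auto
  also have "set xs \<union> insert x S = set (x # xs) \<union> S" by auto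
  finally show ?case by simp
qed

definition CC :: "nat \<Rightarrow> nat \<Rightarrow> complex Matrix.mat \<Rightarrow> nat set \<Rightarrow> complex Matrix.mat" where
  "CC n N A T = Matrix.mat n n (\<lambda>(i,j). if j \<in> T then A $$ (i,j) - A $$ (N,j) * A $$ (i,N) else A $$ (i,j))"

lemma CC_dims[simp]: "dim_row (CC n N A T) = n" "dim_col (CC n N A T) = n"
  unfolding CC_def by simp_all

lemma CC_carrier[simp]: "CC n N A T \<in> carrier_mat n n"
  unfolding CC_def by simp

lemma CC_idx: "i < n \<Longrightarrow> j < n \<Longrightarrow> CC n N A T $$ (i,j) = (if j \<in> T then A $$ (i,j) - A $$ (N,j) * A $$ (i,N) else A $$ (i,j))"
  unfolding CC_def by simp

lemma CC_empty: "A \<in> carrier_mat n n \<Longrightarrow> CC n N A {} = A"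
  by (rule eq_matI) (auto simp: CC_idx)

lemma CC_step:
  assumes "N < n" "x \<notin> T" "N \<notin> T" "x \<noteq> N" "x < n"
  shows "CC n N A T = CC n N A (insert x T) * addrow_mat n (A $$ (N,x)) N x"
proof -
  have "CC n N A (insert x T) * addrow_mat n (A $$ (N,x)) N x = addcol (A $$ (N,x)) x N (CC n N A (insert x T))"
    by (rule addcol_mat[symmetric]) (use assms in auto)
  also have "\<dots> = CC n N A T"
  proof (rule eq_matI)
    fix i j assume "i < dim_row (CC n N A T)" "j < dim_col (CC n N A T)"
    hence ij: "i < n" "j < n" by (auto simp: CC_def)
    show "addcol (A $$ (N,x)) x N (CC n N A (insert x T)) $$ (i, j) = CC n N A T $$ (i, j)"
      using assms ij by (auto simp add: CC_idx)
  qed (auto simp: CC_def)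
  finally show ?thesis by simp
qed

lemma CC_induct:
  assumes "N < n" "distinct xs" "N \<notin> set xs" "set xs \<inter> T = {}" "N \<notin> T" "set xs \<subseteq> {..<n}"
  shows "CC n N A T = CC n N A (set xs \<union> T) * elemW n (rev (map (\<lambda>x. (N,x)) xs)) (rev (map (\<lambda>x. A $$ (N,x)) xs))"
  using assms(2-6)
proof (induction xs arbitrary: T)
  case Nil thus ?case by simp
next
  case (Cons x xs)
  have "CC n N A T = CC n N A (insert x T) * addrow_mat n (A $$ (N,x)) N x"
    by (rule CC_step) (use Cons.prems assms(1) in auto)
  also have "CC n N A (insert x T) = CC n N A (set xs \<union> insert x T) * elemW n (rev (map (\<lambda>x. (N,x)) xs)) (rev (map (\<lambda>x. A $$ (N,x)) xs))"
    by (rule Cons.IH) (use Cons.prems in auto)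
  finally have "CC n N A T = (CC n N A (set xs \<union> insert x T) * elemW n (rev (map (\<lambda>x. (N,x)) xs)) (rev (map (\<lambda>x. A $$ (N,x)) xs))) * addrow_mat n (A $$ (N,x)) N x" .
  also have "\<dots> = CC n N A (set xs \<union> insert x T) * (elemW n (rev (map (\<lambda>x. (N,x)) xs)) (rev (map (\<lambda>x. A $$ (N,x)) xs)) * addrow_mat n (A $$ (N,x)) N x)"
    by (rule assoc_mult_mat[of _ n n _ n _ n]) auto
  also have "elemW n (rev (map (\<lambda>x. (N,x)) xs)) (rev (map (\<lambda>x. A $$ (N,x)) xs)) * addrow_mat n (A $$ (N,x)) N x
      = elemW n (rev (map (\<lambda>x. (N,x)) (x # xs))) (rev (map (\<lambda>x. A $$ (N,x)) (x # xs)))"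
    by (simp add: elemW_append)
  also have "set xs \<union> insert x T = set (x # xs) \<union> T" by auto
  finally show ?case by simp
qed

definition ext :: "nat \<Rightarrow> nat \<Rightarrow> complex Matrix.mat \<Rightarrow> complex Matrix.mat" where
  "ext n N X = Matrix.mat n n (\<lambda>(i,j). if i < N \<and> j < N then X $$ (i,j) else if i = j then 1 else 0)"

lemma ext_dims[simp]: "dim_row (ext n N X) = n" "dim_col (ext n N X) = n"
  unfolding ext_def by simp_all

lemma ext_carrier[simp]: "ext n N X \<in> carrier_mat n n"
  unfolding ext_def by simp

lemma ext_idx: "i < n \<Longrightarrow> j < n \<Longrightarrow> ext n N X $$ (i,j) = (if i < N \<and> j < N then X $$ (i,j) else if i = j then 1 else 0)"
  unfolding ext_def by simp

lemma ext_one: "ext n N (1\<^sub>m N) = 1\<^sub>m n"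
  by (rule eq_matI) (auto simp: ext_idx)

lemma ext_elemW: "validW N W \<Longrightarrow> N \<le> n \<Longrightarrow> elemW n W cs = ext n N (elemW N W cs)"
proof (induction W arbitrary: cs)
  case Nil thus ?case by (simp add: ext_one)
next
  case (Cons w W)
  obtain k l where w: "w = (k,l)" by (cases w) auto
  show ?case
  proof (cases cs)
    case Nil thus ?thesis by (simp add: ext_one)
  next
    case (Cons c cs')
    have v: "validW N W" "k < N" "l < N" "k \<noteq> l" using Cons.prems w unfolding validW_def by auto
    have IH: "elemW n W cs' = ext n N (elemW N W cs')" using Cons.IH[OF v(1) Cons.prems(2)] .
    have "addrow_mat n c k l * ext n N (elemW N W cs') = ext n N (addrow_mat N c k l * elemW N W cs')"
    proof (rule eq_matI)
      fix i j assume "i < dim_row (ext n N (addrow_mat N c k l * elemW N W cs'))"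
        "j < dim_col (ext n N (addrow_mat N c k l * elemW N W cs'))"
      hence ij: "i < n" "j < n" by (auto simp: ext_def)
      show "(addrow_mat n c k l * ext n N (elemW N W cs')) $$ (i, j) = ext n N (addrow_mat N c k l * elemW N W cs') $$ (i, j)"
        using ij v Cons.prems(2)
        by (auto simp: addrow_idx[of _ n] addrow_idx[of _ N] ext_idx simp del: index_mult_mat)
    qed (auto simp: ext_def)
    thus ?thesis unfolding w Cons using IH by simp
  qed
qed

lemma det_block:
  assumes A: "A \<in> carrier_mat (Suc N) (Suc N)" and z: "\<And>j. j < N \<Longrightarrow> A $$ (N,j) = 0" and o: "A $$ (N,N) = 1"
  shows "Determinant.det A = Determinant.det (Matrix.mat N N (\<lambda>(i,j). A $$ (i,j)))"
proof -
  have "Determinant.det A = (\<Sum>j<Suc N. A $$ (N,j) * cofactor A N j)"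
    by (rule laplace_expansion_row[OF A]) simp
  also have "\<dots> = cofactor A N N" using z o by (simp add: sum.lessThan_Suc)
  also have "mat_delete A N N = Matrix.mat N N (\<lambda>(i,j). A $$ (i,j))"
    using A by (intro eq_matI) (auto simp: mat_delete_def)
  hence "cofactor A N N = Determinant.det (Matrix.mat N N (\<lambda>(i,j). A $$ (i,j)))"
    unfolding cofactor_def by simp
  finally show ?thesis .
qed



definition dl :: "nat \<Rightarrow> real \<Rightarrow> real" where "dl n C0 = 1 / (fact n * C0 ^ (n - 1))"
definition K1f :: "nat \<Rightarrow> real \<Rightarrow> real" where "K1f n C0 = (1 + C0) / dl n C0 + (1 + C0)"
definition C2f :: "nat \<Rightarrow> real \<Rightarrow> real" where "C2f n C0 = (1 + K1f n C0) * ((1 + K1f n C0) * C0)"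

lemma dl_pos: "1 \<le> C0 \<Longrightarrow> 0 < dl n C0"
  unfolding dl_def by simp

lemma K1f_ge: "1 \<le> C0 \<Longrightarrow> 1 + C0 \<le> K1f n C0" "1 \<le> C0 \<Longrightarrow> 0 \<le> K1f n C0"
  unfolding K1f_def using dl_pos[of C0 n] by (auto intro!: divide_nonneg_pos)

lemma frac_bd:
  assumes "1 \<le> C0" "cmod a \<le> C0" "dl n C0 \<le> cmod b"
  shows "cmod ((1 - a) / b) \<le> K1f n C0"
proof -
  have "cmod ((1 - a) / b) = cmod (1 - a) / cmod b" by (simp add: norm_divide)
  also have "\<dots> \<le> (1 + C0) / dl n C0"
  proof (rule frac_le)
    show "cmod (1 - a) \<le> 1 + C0" using norm_triangle_ineq4[of 1 a] assms(2) by simp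
  qed (use assms dl_pos[of C0 n] in auto)
  also have "\<dots> \<le> K1f n C0" unfolding K1f_def using assms by simp
  finally show ?thesis .
qed

lemma phase1:
  assumes n: "n = Suc N" "N = Suc m" and A: "A \<in> carrier_mat n n" and mbA: "mb n A C0" and C0: "1 \<le> C0"
    and d: "Determinant.det A = 1"
  shows "\<exists>c1 c2 A2. length c1 = N \<and> length c2 = 2 \<and> (\<forall>c\<in>set c1 \<union> set c2. cmod c \<le> K1f n C0)
     \<and> A2 \<in> carrier_mat n n \<and> A2 $$ (N,N) = 1 \<and> mb n A2 (C2f n C0)
     \<and> A = elemW n (map (\<lambda>i. (N,i)) [0..<N]) c1 * (elemW n [(m,N),(N,m)] c2 * A2)"
proof -
  define K1 where "K1 = K1f n C0"
  have K1: "1 + C0 \<le> K1" "0 \<le> K1" unfolding K1_def using K1f_ge[OF C0] by auto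
  have C0': "0 \<le> C0" using C0 by simp
  have C2: "(1 + K1) * C0 \<le> C2f n C0" "(1 + K1) * ((1 + K1) * C0) = C2f n C0"
  proof -
    have "0 \<le> (1 + K1) * C0" using K1 C0' by simp
    from mult_right_mono[of 1 "1 + K1", OF _ this] K1
    show "(1 + K1) * C0 \<le> C2f n C0" unfolding C2f_def K1_def[symmetric] by simp
    show "(1 + K1) * ((1 + K1) * C0) = C2f n C0" unfolding C2f_def K1_def[symmetric] by simp
  qed
  obtain i0 where i0: "i0 < n" "dl n C0 \<le> cmod (A $$ (i0,N))"
    using det_col_bound[OF A mbA C0, of N] d n unfolding dl_def by auto
  have nz: "A $$ (i0,N) \<noteq> 0" using i0(2) dl_pos[OF C0, of n] by auto
  have bdA: "\<And>i j. i < n \<Longrightarrow> j < n \<Longrightarrow> cmod (A $$ (i,j)) \<le> C0" using mbA unfolding mb_def by auto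
  have Nn: "N < n" "m < n" "m \<noteq> N" using n by auto
  show ?thesis
  proof (cases "i0 = N")
    case False
    hence i0N: "i0 < N" using i0 n by auto
    define c where "c = (1 - A $$ (N,N)) / A $$ (i0,N)"
    have cb: "cmod c \<le> K1" unfolding c_def K1_def by (rule frac_bd[OF C0 bdA i0(2)]) (use Nn in auto)
    define A2 where "A2 = addrow_mat n c N i0 * A"
    have A2c: "A2 \<in> carrier_mat n n" unfolding A2_def by (rule addrow_carrier[OF A])
    have A2NN: "A2 $$ (N,N) = 1" unfolding A2_def using A Nn i0 nz
      by (simp add: addrow_idx c_def del: index_mult_mat)
    have mb2: "mb n A2 (C2f n C0)"
    proof -
      have "mb n A2 ((1 + cmod c) * C0)" unfolding A2_def by (rule mb_addrow[OF A i0(1) mbA])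
      moreover have "(1 + cmod c) * C0 \<le> C2f n C0"
        using C2(1) cb C0' by (meson add_left_mono mult_right_mono order_trans)
      ultimately show ?thesis by (rule mb_mono)
    qed
    define c1 where "c1 = map (\<lambda>i. if i = i0 then - c else 0) [0..<N]"
    have E1: "elemW n (map (\<lambda>i. (N,i)) [0..<N]) c1 = addrow_mat n (- c) N i0"
      unfolding c1_def using elemW_onehot[of "[0..<N]" n N i0 "- c"] i0N by simp
    have E2: "elemW n [(m,N),(N,m)] [0,0] = 1\<^sub>m n"
      by (simp add: addrow_mat_zero)
    have eq: "A = elemW n (map (\<lambda>i. (N,i)) [0..<N]) c1 * (elemW n [(m,N),(N,m)] [0,0] * A2)"
      unfolding E1 E2 A2_def using A2c A Nn i0N by (simp add: addrow_undo)
    have bnds: "\<forall>c\<in>set c1 \<union> set [0,0]. cmod c \<le> K1f n C0" using cb K1 by (auto simp: c1_def K1_def)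
    have len: "length c1 = N" "length [0::complex,0] = 2" by (simp_all add: c1_def)
    show ?thesis
      apply (rule exI[of _ c1], rule exI[of _ "[0,0]"], rule exI[of _ A2])
      using eq A2c A2NN mb2 bnds len by blast
  next
    case True
    define d where "d = (1 - A $$ (m,N)) / A $$ (N,N)"
    have db: "cmod d \<le> K1" unfolding d_def K1_def
      by (rule frac_bd[OF C0 bdA]) (use Nn i0 True in auto)
    define A1 where "A1 = addrow_mat n d m N * A"
    have A1c: "A1 \<in> carrier_mat n n" unfolding A1_def by (rule addrow_carrier[OF A])
    have A1mN: "A1 $$ (m,N) = 1" unfolding A1_def using A Nn nz True
      by (simp add: addrow_idx d_def del: index_mult_mat)
    have A1NN: "A1 $$ (N,N) = A $$ (N,N)" unfolding A1_def using A Nn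
      by (simp add: addrow_idx del: index_mult_mat)
    have mb1: "mb n A1 ((1 + K1) * C0)"
    proof -
      have "mb n A1 ((1 + cmod d) * C0)" unfolding A1_def by (rule mb_addrow[OF A Nn(1) mbA])
      moreover have "(1 + cmod d) * C0 \<le> (1 + K1) * C0"
        using db C0' by (simp add: mult_right_mono)
      ultimately show ?thesis by (rule mb_mono)
    qed
    define e where "e = 1 - A $$ (N,N)"
    have eb: "cmod e \<le> K1" unfolding e_def
      using norm_triangle_ineq4[of 1 "A $$ (N,N)"] bdA[of N N] Nn K1 by simp
    define A2 where "A2 = addrow_mat n e N m * A1"
    have A2c: "A2 \<in> carrier_mat n n" unfolding A2_def by (rule addrow_carrier[OF A1c])
    have A2NN: "A2 $$ (N,N) = 1" unfolding A2_def using A1c Nn A1mN A1NN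
      by (simp add: addrow_idx e_def del: index_mult_mat)
    have mb2: "mb n A2 (C2f n C0)"
    proof -
      have "mb n A2 ((1 + cmod e) * ((1 + K1) * C0))" unfolding A2_def by (rule mb_addrow[OF A1c Nn(2) mb1])
      moreover have "(1 + cmod e) * ((1 + K1) * C0) \<le> C2f n C0"
        unfolding C2(2)[symmetric] using eb K1 C0' by (simp add: mult_right_mono)
      ultimately show ?thesis by (rule mb_mono)
    qed
    have E1: "elemW n (map (\<lambda>i. (N,i)) [0..<N]) (replicate N 0) = 1\<^sub>m n"
      by (rule elemW_zeros)
    have eq: "A = elemW n (map (\<lambda>i. (N,i)) [0..<N]) (replicate N 0) * (elemW n [(m,N),(N,m)] [- d, - e] * A2)"
    proof -
      have "elemW n [(m,N),(N,m)] [- d, - e] * A2 = addrow_mat n (- d) m N * (addrow_mat n (- e) N m * A2)"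
        using A2c by (simp add: assoc_mult_mat[of _ n n _ n _ n])
      also have "addrow_mat n (- e) N m * A2 = A1" unfolding A2_def using A1c Nn by (simp add: addrow_undo)
      also have "addrow_mat n (- d) m N * A1 = A" unfolding A1_def using A Nn by (simp add: addrow_undo)
      finally show ?thesis unfolding E1 using A by simp
    qed
    have bnds: "\<forall>c\<in>set (replicate N 0) \<union> set [- d, - e]. cmod c \<le> K1f n C0" using db eb K1 by (auto simp: K1_def)
    have len: "length (replicate N (0::complex)) = N" "length [- d, - e] = 2" by simp_all
    show ?thesis
      apply (rule exI[of _ "replicate N 0"], rule exI[of _ "[- d, - e]"], rule exI[of _ A2])
      using eq A2c A2NN mb2 bnds len by blast
  qed
qed



lemma bd3: "cmod a \<le> K \<Longrightarrow> cmod b \<le> K \<Longrightarrow> cmod c \<le> K \<Longrightarrow> cmod (a - b * c) \<le> K + K * K"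
proof -
  assume h: "cmod a \<le> K" "cmod b \<le> K" "cmod c \<le> K"
  have "cmod (a - b * c) \<le> cmod a + cmod b * cmod c"
    using norm_triangle_ineq4[of a "b * c"] by (simp add: norm_mult)
  also have "cmod b * cmod c \<le> K * K" using h order_trans[OF norm_ge_zero h(1)] by (intro mult_mono) auto
  finally show ?thesis using h by linarith
qed

lemma mb_nonneg: "mb n X K \<Longrightarrow> 0 < n \<Longrightarrow> 0 \<le> K"
  unfolding mb_def by (meson norm_ge_zero order_trans)

lemma mb_RC: assumes "mb n X K" "0 \<le> K" "N < n" shows "mb n (RC n N X S) (K + K * K)"
  unfolding mb_def
proof (intro allI impI)
  fix i j assume ij: "i < n" "j < n"
  have b: "\<And>a b. a < n \<Longrightarrow> b < n \<Longrightarrow> cmod (X $$ (a,b)) \<le> K" using assms(1) unfolding mb_def by auto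
  have KK: "K \<le> K + K * K" using assms(2) by simp
  show "cmod (RC n N X S $$ (i, j)) \<le> K + K * K"
  proof (cases "i \<in> S")
    case True thus ?thesis unfolding RC_idx[OF ij] using b ij assms(3) by (simp add: bd3)
  next
    case False
    have "cmod (X $$ (i,j)) \<le> K + K * K" using b[OF ij] KK by linarith
    thus ?thesis unfolding RC_idx[OF ij] using False by simp
  qed
qed

lemma mb_CC: assumes "mb n X K" "0 \<le> K" "N < n" shows "mb n (CC n N X S) (K + K * K)"
  unfolding mb_def
proof (intro allI impI)
  fix i j assume ij: "i < n" "j < n"
  have b: "\<And>a b. a < n \<Longrightarrow> b < n \<Longrightarrow> cmod (X $$ (a,b)) \<le> K" using assms(1) unfolding mb_def by auto
  have KK: "K \<le> K + K * K" using assms(2) by simp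
  show "cmod (CC n N X S $$ (i, j)) \<le> K + K * K"
  proof (cases "j \<in> S")
    case True thus ?thesis unfolding CC_idx[OF ij] using b ij assms(3) by (simp add: bd3)
  next
    case False
    have "cmod (X $$ (i,j)) \<le> K + K * K" using b[OF ij] KK by linarith
    thus ?thesis unfolding CC_idx[OF ij] using False by simp
  qed
qed

lemma phase23:
  assumes n: "n = Suc N" and A2: "A2 \<in> carrier_mat n n" and o: "A2 $$ (N,N) = 1"
    and mb2: "mb n A2 C2" and C2: "0 \<le> C2"
  defines "A3 \<equiv> RC n N A2 {0..<N}"
  defines "A4 \<equiv> CC n N A3 {0..<N}"
  shows "A2 = elemW n (map (\<lambda>x. (x,N)) [0..<N]) (map (\<lambda>x. A2 $$ (x,N)) [0..<N]) *
           (A4 * elemW n (rev (map (\<lambda>x. (N,x)) [0..<N])) (rev (map (\<lambda>x. A3 $$ (N,x)) [0..<N])))"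
    and "\<forall>c \<in> set (map (\<lambda>x. A2 $$ (x,N)) [0..<N]) \<union> set (rev (map (\<lambda>x. A3 $$ (N,x)) [0..<N])). cmod c \<le> C2 + C2 * C2"
    and "mb n A4 ((C2 + C2 * C2) + (C2 + C2 * C2) * (C2 + C2 * C2))"
    and "\<forall>j<N. A4 $$ (N,j) = 0" "\<forall>i<N. A4 $$ (i,N) = 0" "A4 $$ (N,N) = 1"
proof -
  have Nn: "N < n" using n by simp
  have e2: "A2 = elemW n (map (\<lambda>x. (x,N)) [0..<N]) (map (\<lambda>x. A2 $$ (x,N)) [0..<N]) * A3"
    using RC_induct[of N n "[0..<N]" "{}" A2] RC_empty[OF A2, of N] Nn unfolding A3_def by simp
  have e3: "A3 = A4 * elemW n (rev (map (\<lambda>x. (N,x)) [0..<N])) (rev (map (\<lambda>x. A3 $$ (N,x)) [0..<N]))"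
  proof -
    have "CC n N A3 {} = CC n N A3 (set [0..<N] \<union> {}) * elemW n (rev (map (\<lambda>x. (N,x)) [0..<N])) (rev (map (\<lambda>x. A3 $$ (N,x)) [0..<N]))"
      by (rule CC_induct) (use Nn in auto)
    moreover have "CC n N A3 {} = A3" by (rule CC_empty) (simp add: A3_def)
    ultimately show ?thesis unfolding A4_def by simp
  qed
  show "A2 = elemW n (map (\<lambda>x. (x,N)) [0..<N]) (map (\<lambda>x. A2 $$ (x,N)) [0..<N]) *
           (A4 * elemW n (rev (map (\<lambda>x. (N,x)) [0..<N])) (rev (map (\<lambda>x. A3 $$ (N,x)) [0..<N])))"
    using e2 e3 by metis
  have A3idx: "\<And>i j. i < n \<Longrightarrow> j < n \<Longrightarrow> A3 $$ (i,j) = (if i < N then A2 $$ (i,j) - A2 $$ (i,N) * A2 $$ (N,j) else A2 $$ (i,j))"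
    unfolding A3_def by (simp add: RC_idx)
  have A4idx: "\<And>i j. i < n \<Longrightarrow> j < n \<Longrightarrow> A4 $$ (i,j) = (if j < N then A3 $$ (i,j) - A3 $$ (N,j) * A3 $$ (i,N) else A3 $$ (i,j))"
    unfolding A4_def by (simp add: CC_idx)
  have mb3: "mb n A3 (C2 + C2 * C2)" unfolding A3_def by (rule mb_RC[OF mb2 C2 Nn])
  show "mb n A4 ((C2 + C2 * C2) + (C2 + C2 * C2) * (C2 + C2 * C2))"
    unfolding A4_def by (rule mb_CC[OF mb3 _ Nn]) (use C2 in simp)
  have C2le: "C2 \<le> C2 + C2 * C2" using C2 by simp
  show "\<forall>c \<in> set (map (\<lambda>x. A2 $$ (x,N)) [0..<N]) \<union> set (rev (map (\<lambda>x. A3 $$ (N,x)) [0..<N])). cmod c \<le> C2 + C2 * C2"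
  proof -
    have h1: "cmod (A2 $$ (x,N)) \<le> C2 + C2 * C2" if "x < N" for x
    proof -
      have "cmod (A2 $$ (x,N)) \<le> C2" using mb2 Nn that unfolding mb_def by auto
      thus ?thesis using C2le by linarith
    qed
    have h2: "cmod (A3 $$ (N,x)) \<le> C2 + C2 * C2" if "x < N" for x
      using mb3 Nn that unfolding mb_def by auto
    show ?thesis using h1 h2 by auto
  qed
  have A3NN: "A3 $$ (N,N) = 1" using A3idx[of N N] Nn o by simp
  show "\<forall>j<N. A4 $$ (N,j) = 0" using A4idx Nn A3NN by simp
  show "\<forall>i<N. A4 $$ (i,N) = 0" using A4idx A3idx Nn o by simp
  show "A4 $$ (N,N) = 1" using A4idx[of N N] Nn A3NN by simp
qed



lemma small_cases:
  assumes "n < 2" "A \<in> carrier_mat n n" "Determinant.det A = 1"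
  shows "A = 1\<^sub>m n"
proof (cases "n = 0")
  case True thus ?thesis using assms by (intro eq_matI) auto
next
  case False
  hence n1: "n = 1" using assms by simp
  have "upper_triangular A" using assms n1 by (auto simp: upper_triangular_def)
  hence "Determinant.det A = prod_list (diag_mat A)" by (rule det_upper_triangular[OF _ assms(2)])
  hence "A $$ (0,0) = 1" using assms n1 by (simp add: diag_mat_def)
  thus ?thesis using assms n1 by (intro eq_matI) auto
qed

lemma CL: "\<exists>W D. validW n W \<and> (\<forall>A. A \<in> carrier_mat n n \<longrightarrow> mb n A C \<longrightarrow> Determinant.det A = 1 \<longrightarrow>
     (\<exists>cs. length cs = length W \<and> (\<forall>c\<in>set cs. cmod c \<le> D) \<and> A = elemW n W cs))"
proof (induction n arbitrary: C rule: less_induct)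
  case (less n)
  show ?case
  proof (cases "n < 2")
    case True
    show ?thesis
      by (rule exI[of _ "[]"], rule exI[of _ 0]) (use small_cases[OF True] in \<open>auto simp: validW_def\<close>)
  next
    case False
    define m where "m = n - 2"
    define N where "N = Suc m"
    have nN: "n = Suc N" unfolding N_def m_def using False by simp
    define C0 where "C0 = max C 1"
    have C0: "1 \<le> C0" "C \<le> C0" unfolding C0_def by auto
    define C2 where "C2 = C2f n C0"
    define C3 where "C3 = C2 + C2 * C2"
    define C4 where "C4 = C3 + C3 * C3"
    obtain W' D' where IH1: "validW N W'" and IH2: "\<And>A. A \<in> carrier_mat N N \<Longrightarrow> mb N A C4 \<Longrightarrow> Determinant.det A = 1 \<Longrightarrow>
        (\<exists>cs. length cs = length W' \<and> (\<forall>c\<in>set cs. cmod c \<le> D') \<and> A = elemW N W' cs)"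
      using less.IH[of N C4] nN by auto
    define W1 where "W1 = map (\<lambda>i. (N,i)) [0..<N]"
    define W2 where "W2 = [(m,N),(N,m)]"
    define W3 where "W3 = map (\<lambda>x. (x,N)) [0..<N]"
    define W5 where "W5 = rev (map (\<lambda>x. (N,x)) [0..<N])"
    define W where "W = W1 @ W2 @ W3 @ W' @ W5"
    define D where "D = max (K1f n C0) (max C3 D')"
    have vW: "validW n W"
      using IH1 nN unfolding W_def W1_def W2_def W3_def W5_def validW_def N_def by fastforce
    show ?thesis
    proof (rule exI[of _ W], rule exI[of _ D], intro conjI allI impI)
      show "validW n W" by (rule vW)
      fix A assume A: "A \<in> carrier_mat n n" and mbA: "mb n A C" and d: "Determinant.det A = 1"
      have mbA0: "mb n A C0" by (rule mb_mono[OF mbA C0(2)])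
      obtain c1 c2 A2 where c12: "length c1 = N" "length c2 = 2" "\<forall>c\<in>set c1 \<union> set c2. cmod c \<le> K1f n C0"
        and A2: "A2 \<in> carrier_mat n n" "A2 $$ (N,N) = 1" "mb n A2 C2"
        and eq1: "A = elemW n W1 c1 * (elemW n W2 c2 * A2)"
        using phase1[OF nN N_def A mbA0 C0(1) d] unfolding W1_def W2_def C2_def by blast
      have C2nn: "0 \<le> C2" using mb_nonneg[OF A2(3)] nN by simp
      define A3 where "A3 = RC n N A2 {0..<N}"
      define A4 where "A4 = CC n N A3 {0..<N}"
      define c3 where "c3 = map (\<lambda>x. A2 $$ (x,N)) [0..<N]"
      define c5 where "c5 = rev (map (\<lambda>x. A3 $$ (N,x)) [0..<N])"
      note P = phase23[OF nN A2(1,2,3) C2nn, folded A3_def, folded A4_def c3_def c5_def W3_def W5_def C3_def]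
      have A4c: "A4 \<in> carrier_mat n n" unfolding A4_def by simp
      have eqA: "A = elemW n W1 c1 * (elemW n W2 c2 * (elemW n W3 c3 * (A4 * elemW n W5 c5)))"
        using eq1 P(1) by simp
      have vWs: "validW n W1" "validW n W2" "validW n W3" "validW n W5" using vW unfolding W_def by auto
      have c5c: "A4 * elemW n W5 c5 \<in> carrier_mat n n" by (rule mult_carrier_mat[OF A4c elemW_carrier])
      have c35c: "elemW n W3 c3 * (A4 * elemW n W5 c5) \<in> carrier_mat n n" by (rule mult_carrier_mat[OF elemW_carrier c5c])
      have c235c: "elemW n W2 c2 * (elemW n W3 c3 * (A4 * elemW n W5 c5)) \<in> carrier_mat n n" by (rule mult_carrier_mat[OF elemW_carrier c35c])
      have "Determinant.det A = Determinant.det (elemW n W1 c1) * (Determinant.det (elemW n W2 c2) * (Determinant.det (elemW n W3 c3) * (Determinant.det A4 * Determinant.det (elemW n W5 c5))))"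
        unfolding eqA
        by (simp only: det_mult[OF elemW_carrier c235c] det_mult[OF elemW_carrier c35c]
              det_mult[OF elemW_carrier c5c] det_mult[OF A4c elemW_carrier])
      hence "Determinant.det A = Determinant.det A4"
        by (simp add: elemW_det[OF vWs(1)] elemW_det[OF vWs(2)] elemW_det[OF vWs(3)] elemW_det[OF vWs(4)])
      hence dA4: "Determinant.det A4 = 1" using d by simp
      define B where "B = Matrix.mat N N (\<lambda>(i,j). A4 $$ (i,j))"
      have Bc: "B \<in> carrier_mat N N" unfolding B_def by simp
      have dB: "Determinant.det B = 1"
        using det_block[of A4 N] A4c nN P(4,6) dA4 unfolding B_def by simp
      have mbB: "mb N B C4" using P(3) nN unfolding mb_def B_def C4_def by auto
      obtain cs' where cs': "length cs' = length W'" "\<forall>c\<in>set cs'. cmod c \<le> D'" "B = elemW N W' cs'"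
        using IH2[OF Bc mbB dB] by blast
      have "A4 = ext n N B"
      proof (rule eq_matI)
        fix i j assume "i < dim_row (ext n N B)" "j < dim_col (ext n N B)"
        hence ij: "i < n" "j < n" by auto
        show "A4 $$ (i,j) = ext n N B $$ (i,j)"
          using ij P(4,5,6) nN by (auto simp: ext_idx B_def less_Suc_eq)
      qed (use A4c in auto)
      also have "\<dots> = elemW n W' cs'" unfolding cs'(3) by (rule ext_elemW[symmetric, OF IH1]) (use nN in simp)
      finally have A4e: "A4 = elemW n W' cs'" .
      have lens: "length W1 = length c1" "length W2 = length c2" "length W3 = length c3" "length W' = length cs'"
        using c12 cs' unfolding W1_def W2_def W3_def c3_def by auto
      have "A = elemW n W (c1 @ c2 @ c3 @ cs' @ c5)"
        unfolding eqA A4e W_def using lens by (simp add: elemW_append)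
      moreover have "length (c1 @ c2 @ c3 @ cs' @ c5) = length W"
        using lens unfolding W_def W5_def c5_def by simp
      moreover have "\<forall>c\<in>set (c1 @ c2 @ c3 @ cs' @ c5). cmod c \<le> D"
      proof -
        have b3: "\<forall>c\<in>set c3 \<union> set c5. cmod c \<le> C3" using P(2) unfolding c3_def c5_def .
        have d1: "K1f n C0 \<le> D" "C3 \<le> D" "D' \<le> D" unfolding D_def by auto
        have "cmod c \<le> D" if "c \<in> set c1 \<union> set c2" for c using c12(3) that d1(1) by force
        moreover have "cmod c \<le> D" if "c \<in> set c3 \<union> set c5" for c using b3 that d1(2) by force
        moreover have "cmod c \<le> D" if "c \<in> set cs'" for c using cs'(2) that d1(3) by force
        ultimately show ?thesis by auto
      qed
      ultimately show "\<exists>cs. length cs = length W \<and> (\<forall>c\<in>set cs. cmod c \<le> D) \<and> A = elemW n W cs"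
        by blast
    qed
  qed
qed



definition lift :: "(nat \<Rightarrow> real) \<Rightarrow> (nat \<Rightarrow> complex Matrix.mat) \<Rightarrow> mat" where
  "lift p Y = (\<lambda>a b. Psi p (\<lambda>m. Y m $$ (a,b)))"

definition bF :: "nat \<Rightarrow> (nat \<Rightarrow> complex Matrix.mat) \<Rightarrow> bool" where
  "bF k Y \<longleftrightarrow> (\<forall>m. Y m \<in> carrier_mat k k) \<and> (\<exists>B. \<forall>m. mb k (Y m) B)"

definition agree :: "nat \<Rightarrow> mat \<Rightarrow> mat \<Rightarrow> bool" where
  "agree k X Y \<longleftrightarrow> (\<forall>a<k. \<forall>b<k. X a b = Y a b)"

definition Gmat :: "(nat \<Rightarrow> real) \<Rightarrow> nat \<Rightarrow> nat \<Rightarrow> (nat \<Rightarrow> complex) \<Rightarrow> mat" where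
  "Gmat p i j \<alpha> = (\<lambda>a b. if a = b then eps p else if a = i \<and> b = j then Psi p \<alpha> else (\<lambda>_. 0))"

lemma bF_entry: "bF k Y \<Longrightarrow> a < k \<Longrightarrow> b < k \<Longrightarrow> bnd (\<lambda>m. Y m $$ (a,b))"
  unfolding bF_def bnd_def mb_def by blast

lemma mat_mult_idx:
  assumes "X \<in> carrier_mat k k" "Y \<in> carrier_mat k k" "a < k" "b < k"
  shows "(X * Y) $$ (a,b) = (\<Sum>l<k. X $$ (a,l) * Y $$ (l,b))"
  using assms by (simp add: scalar_prod_def atLeast0LessThan)

lemma mb_mult:
  assumes X: "X \<in> carrier_mat k k" and Y: "Y \<in> carrier_mat k k" and "mb k X B1" "mb k Y B2"
  shows "mb k (X * Y) (real k * (max B1 0 * max B2 0))"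
  unfolding mb_def
proof (intro allI impI)
  fix a b assume ab: "a < k" "b < k"
  have "cmod ((X * Y) $$ (a,b)) = cmod (\<Sum>l<k. X $$ (a,l) * Y $$ (l,b))" using mat_mult_idx[OF X Y ab] by simp
  also have "\<dots> \<le> (\<Sum>l<k. cmod (X $$ (a,l) * Y $$ (l,b)))" by (rule norm_sum)
  also have "\<dots> \<le> (\<Sum>l<k. max B1 0 * max B2 0)"
  proof (rule sum_mono)
    fix l assume l: "l \<in> {..<k}"
    have "cmod (X $$ (a,l)) \<le> max B1 0" "cmod (Y $$ (l,b)) \<le> max B2 0"
      using assms(3,4) ab l unfolding mb_def by (auto intro: le_max_iff_disj[THEN iffD2])
    thus "cmod (X $$ (a,l) * Y $$ (l,b)) \<le> max B1 0 * max B2 0"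
      unfolding norm_mult by (intro mult_mono) auto
  qed
  also have "\<dots> = real k * (max B1 0 * max B2 0)" by simp
  finally show "cmod ((X * Y) $$ (a,b)) \<le> real k * (max B1 0 * max B2 0)" .
qed

lemma bF_mult: "bF k Y \<Longrightarrow> bF k Z \<Longrightarrow> bF k (\<lambda>m. Y m * Z m)"
proof -
  assume Y: "bF k Y" and Z: "bF k Z"
  then obtain B1 B2 where B: "\<And>m. mb k (Y m) B1" "\<And>m. mb k (Z m) B2" unfolding bF_def by blast
  have c: "\<And>m. Y m \<in> carrier_mat k k" "\<And>m. Z m \<in> carrier_mat k k" using Y Z unfolding bF_def by auto
  have "\<And>m. Y m * Z m \<in> carrier_mat k k" using c by (intro mult_carrier_mat) auto
  moreover have "\<And>m. mb k (Y m * Z m) (real k * (max B1 0 * max B2 0))"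
    by (rule mb_mult[OF c(1) c(2) B(1) B(2)])
  ultimately show ?thesis unfolding bF_def by blast
qed

lemma mb_one: "mb k (1\<^sub>m k) 1"
  unfolding mb_def by auto

lemma mb_addrow_mat: "mb k (addrow_mat k c i j) (cmod c + 1)"
  unfolding mb_def
proof (intro allI impI)
  fix a b assume ab: "a < k" "b < k"
  show "cmod (addrow_mat k c i j $$ (a, b)) \<le> cmod c + 1"
    using ab norm_triangle_ineq[of c 1] by (auto simp: norm_ge_zero)
qed

lemma bF_addrow: "bnd \<alpha> \<Longrightarrow> bF k (\<lambda>m. addrow_mat k (\<alpha> m) i j)"
proof -
  assume "bnd \<alpha>"
  then obtain B where B: "\<And>m. cmod (\<alpha> m) \<le> B" unfolding bnd_def by auto
  have "mb k (addrow_mat k (\<alpha> m) i j) (B + 1)" for m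
  proof -
    have "mb k (addrow_mat k (\<alpha> m) i j) (cmod (\<alpha> m) + 1)" by (rule mb_addrow_mat)
    thus ?thesis by (rule mb_mono) (use B[of m] in simp)
  qed
  thus ?thesis unfolding bF_def by auto
qed

lemma bnd_finite: "finite I \<Longrightarrow> (\<forall>i\<in>I. bnd (f i)) \<Longrightarrow> \<exists>C. \<forall>i\<in>I. \<forall>m. cmod (f i m) \<le> C"
proof (induction I rule: finite_induct)
  case empty thus ?case by auto
next
  case (insert x I)
  then obtain C where C: "\<forall>i\<in>I. \<forall>m. cmod (f i m) \<le> C" by auto
  obtain C' where C': "\<forall>m. cmod (f x m) \<le> C'" using insert.prems unfolding bnd_def by auto
  show ?case by (rule exI[of _ "max C C'"]) (use C C' in \<open>auto intro: le_max_iff_disj[THEN iffD2]\<close>)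
qed

context PP
begin

lemma hmult_lift: "bnd u \<Longrightarrow> bnd v \<Longrightarrow> hmult p (Psi p u) (Psi p v) = Psi p (\<lambda>m. u m * v m)"
  by (simp add: hmult_Psi Phi_Psi)

lemma matmul_agree:
  assumes Y: "bF k Y" and Z: "bF k Z" and X1: "agree k X1 (lift p Y)" and X2: "agree k X2 (lift p Z)"
  shows "agree k (matmul p k X1 X2) (lift p (\<lambda>m. Y m * Z m))"
  unfolding agree_def
proof (intro allI impI)
  fix a b assume ab: "a < k" "b < k"
  have c: "\<And>m. Y m \<in> carrier_mat k k" "\<And>m. Z m \<in> carrier_mat k k" using Y Z unfolding bF_def by auto
  show "matmul p k X1 X2 a b = lift p (\<lambda>m. Y m * Z m) a b"
  proof (rule ext)
    fix z
    have "matmul p k X1 X2 a b z = (\<Sum>l<k. hmult p (X1 a l) (X2 l b) z)" unfolding matmul_def by simp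
    also have "\<dots> = (\<Sum>l<k. Psi p (\<lambda>m. Y m $$ (a,l) * Z m $$ (l,b)) z)"
    proof (rule sum.cong[OF refl])
      fix l assume l: "l \<in> {..<k}"
      have "X1 a l = Psi p (\<lambda>m. Y m $$ (a,l))" "X2 l b = Psi p (\<lambda>m. Z m $$ (l,b))"
        using X1 X2 ab l unfolding agree_def lift_def by auto
      thus "hmult p (X1 a l) (X2 l b) z = Psi p (\<lambda>m. Y m $$ (a,l) * Z m $$ (l,b)) z"
        using hmult_lift[OF bF_entry[OF Y] bF_entry[OF Z]] ab l by simp
    qed
    also have "\<dots> = Psi p (\<lambda>m. \<Sum>l<k. Y m $$ (a,l) * Z m $$ (l,b)) z"
      by (rule Psi_sum[symmetric]) (use ab in \<open>auto intro!: bnd_mult bF_entry[OF Y] bF_entry[OF Z]\<close>)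
    also have "\<dots> = Psi p (\<lambda>m. (Y m * Z m) $$ (a,b)) z"
      using mat_mult_idx[OF c(1) c(2) ab] by simp
    finally show "matmul p k X1 X2 a b z = lift p (\<lambda>m. Y m * Z m) a b z" unfolding lift_def by simp
  qed
qed

lemma idmat_agree: "agree k (idmat p) (lift p (\<lambda>m. 1\<^sub>m k))"
  unfolding agree_def lift_def idmat_def by (auto simp: eps_Psi Psi_zero)

lemma Gmat_agree:
  assumes "i \<noteq> j" "i < k" "j < k"
  shows "agree k (Gmat p i j \<alpha>) (lift p (\<lambda>m. addrow_mat k (\<alpha> m) i j))"
  unfolding agree_def lift_def Gmat_def using assms by (auto simp: eps_Psi Psi_zero)

lemma foldr_agree:
  "validW k W \<Longrightarrow> length \<alpha>s = length W \<Longrightarrow> (\<forall>\<alpha>\<in>set \<alpha>s. bnd \<alpha>) \<Longrightarrow>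
    agree k (foldr (matmul p k) (map (\<lambda>((i,j),\<alpha>). Gmat p i j \<alpha>) (zip W \<alpha>s)) (idmat p))
       (lift p (\<lambda>m. elemW k W (map (\<lambda>\<alpha>. \<alpha> m) \<alpha>s))) \<and>
    bF k (\<lambda>m. elemW k W (map (\<lambda>\<alpha>. \<alpha> m) \<alpha>s))"
proof (induction W arbitrary: \<alpha>s)
  case Nil
  thus ?case using idmat_agree[of k] mb_one[of k] unfolding bF_def by auto
next
  case (Cons w W)
  obtain i j where w: "w = (i,j)" by (cases w) auto
  obtain \<alpha> \<alpha>s' where as: "\<alpha>s = \<alpha> # \<alpha>s'" using Cons.prems(2) by (cases \<alpha>s) auto
  have v: "validW k W" "i < k" "j < k" "i \<noteq> j" using Cons.prems(1) w unfolding validW_def by auto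
  have IH: "agree k (foldr (matmul p k) (map (\<lambda>((i,j),\<alpha>). Gmat p i j \<alpha>) (zip W \<alpha>s')) (idmat p))
       (lift p (\<lambda>m. elemW k W (map (\<lambda>\<alpha>. \<alpha> m) \<alpha>s')))"
    "bF k (\<lambda>m. elemW k W (map (\<lambda>\<alpha>. \<alpha> m) \<alpha>s'))"
    using Cons.IH[of \<alpha>s'] v(1) Cons.prems as by auto
  have ba: "bnd \<alpha>" using Cons.prems(3) as by auto
  have "agree k (matmul p k (Gmat p i j \<alpha>) (foldr (matmul p k) (map (\<lambda>((i,j),\<alpha>). Gmat p i j \<alpha>) (zip W \<alpha>s')) (idmat p)))
      (lift p (\<lambda>m. addrow_mat k (\<alpha> m) i j * elemW k W (map (\<lambda>\<alpha>. \<alpha> m) \<alpha>s')))"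
    by (rule matmul_agree[OF bF_addrow[OF ba] IH(2) Gmat_agree[OF v(4,2,3)] IH(1)])
  moreover have "bF k (\<lambda>m. addrow_mat k (\<alpha> m) i j * elemW k W (map (\<lambda>\<alpha>. \<alpha> m) \<alpha>s'))"
    by (rule bF_mult[OF bF_addrow[OF ba] IH(2)])
  ultimately show ?case unfolding w as by simp
qed

lemma hprod_Psi: "(\<forall>x\<in>set xs. x \<in> Ap p) \<Longrightarrow>
   hprod_list p xs = Psi p (\<lambda>m. prod_list (map (\<lambda>x. Phi p x m) xs)) \<and> bnd (\<lambda>m. prod_list (map (\<lambda>x. Phi p x m) xs))"
proof (induction xs)
  case Nil thus ?case by (simp add: hprod_list_def eps_Psi)
next
  case (Cons x xs)
  hence IH: "hprod_list p xs = Psi p (\<lambda>m. prod_list (map (\<lambda>x. Phi p x m) xs))"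
    "bnd (\<lambda>m. prod_list (map (\<lambda>x. Phi p x m) xs))" and x: "x \<in> Ap p" by auto
  have "hprod_list p (x # xs) = hmult p x (hprod_list p xs)" unfolding hprod_list_def by simp
  also have "\<dots> = Psi p (\<lambda>m. Phi p x m * prod_list (map (\<lambda>x. Phi p x m) xs))"
    unfolding IH(1) hmult_Psi Phi_Psi[OF IH(2)] ..
  finally show ?case using bnd_mult[OF Phi_bnd[OF x] IH(2)] by simp
qed

theorem main_PP:
  assumes M: "M \<in> SL p k"
  shows "in_E p k M"
proof -
  have ent: "\<And>a b. a < k \<Longrightarrow> b < k \<Longrightarrow> M a b \<in> Ap p" and hd: "hdet p k M = eps p"
    using M unfolding SL_def by auto
  define X where "X = (\<lambda>m. Matrix.mat k k (\<lambda>(a,b). Phi p (M a b) m))"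
  have Xc: "\<And>m. X m \<in> carrier_mat k k" unfolding X_def by simp
  have Xi: "\<And>m a b. a < k \<Longrightarrow> b < k \<Longrightarrow> X m $$ (a,b) = Phi p (M a b) m" unfolding X_def by simp
  have "\<forall>ab\<in>{..<k} \<times> {..<k}. bnd ((\<lambda>(a,b). Phi p (M a b)) ab)" using ent Phi_bnd by auto
  from bnd_finite[OF _ this] obtain C where C: "\<forall>ab\<in>{..<k} \<times> {..<k}. \<forall>m. cmod ((\<lambda>(a,b). Phi p (M a b)) ab m) \<le> C"
    by auto
  have Cb: "cmod (Phi p (M a b) m) \<le> C" if "a < k" "b < k" for a b m
    using C that by fastforce
  have mbX: "\<And>m. mb k (X m) C" unfolding mb_def using Cb Xi by simp
  define P where "P = {\<sigma>. \<sigma> permutes {..<k}}"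
  have finP: "finite P" unfolding P_def by (simp add: finite_permutations)
  define b where "b = (\<lambda>\<sigma> m. prod_list (map (\<lambda>x. Phi p x m) (map (\<lambda>i. M i (\<sigma> i)) [0..<k])))"
  have hp: "hprod_list p (map (\<lambda>i. M i (\<sigma> i)) [0..<k]) = Psi p (b \<sigma>) \<and> bnd (b \<sigma>)" if "\<sigma> \<in> P" for \<sigma>
  proof -
    have "\<forall>x\<in>set (map (\<lambda>i. M i (\<sigma> i)) [0..<k]). x \<in> Ap p"
      using that ent permutes_in_image[of \<sigma> "{..<k}"] unfolding P_def by auto
    thus ?thesis using hprod_Psi unfolding b_def by blast
  qed
  have bdet: "b \<sigma> m = (\<Prod>i = 0..<k. X m $$ (i, \<sigma> i))" if "\<sigma> \<in> P" for \<sigma> m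
  proof -
    have "b \<sigma> m = (\<Prod>i\<in>set [0..<k]. Phi p (M i (\<sigma> i)) m)"
      unfolding b_def by (subst prod.distinct_set_conv_list) (auto simp: o_def)
    also have "\<dots> = (\<Prod>i = 0..<k. X m $$ (i, \<sigma> i))"
      using that permutes_in_image[of \<sigma> "{..<k}"] unfolding P_def
      by (intro prod.cong) (auto simp: Xi)
    finally show ?thesis .
  qed
  have "hdet p k M = (\<lambda>z. \<Sum>\<sigma>\<in>P. of_int (sign \<sigma>) * Psi p (b \<sigma>) z)"
    unfolding hdet_def P_def using hp unfolding P_def by simp
  also have "\<dots> = Psi p (\<lambda>m. \<Sum>\<sigma>\<in>P. of_int (sign \<sigma>) * b \<sigma> m)"
  proof (rule ext)
    fix z
    have "(\<Sum>\<sigma>\<in>P. of_int (sign \<sigma>) * Psi p (b \<sigma>) z) = (\<Sum>\<sigma>\<in>P. Psi p (\<lambda>m. of_int (sign \<sigma>) * b \<sigma> m) z)"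
      using hp by (intro sum.cong) (auto simp: Psi_cmult)
    also have "\<dots> = Psi p (\<lambda>m. \<Sum>\<sigma>\<in>P. of_int (sign \<sigma>) * b \<sigma> m) z"
      by (rule Psi_sum[symmetric, OF finP]) (use hp in \<open>auto intro: bnd_cmult\<close>)
    finally show "(\<Sum>\<sigma>\<in>P. of_int (sign \<sigma>) * Psi p (b \<sigma>) z) = Psi p (\<lambda>m. \<Sum>\<sigma>\<in>P. of_int (sign \<sigma>) * b \<sigma> m) z" .
  qed
  finally have hd2: "hdet p k M = Psi p (\<lambda>m. \<Sum>\<sigma>\<in>P. of_int (sign \<sigma>) * b \<sigma> m)" .
  have bndD: "bnd (\<lambda>m. \<Sum>\<sigma>\<in>P. of_int (sign \<sigma>) * b \<sigma> m)"
    using finP hp by (auto intro!: bnd_sum bnd_cmult)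
  have "(\<lambda>m. \<Sum>\<sigma>\<in>P. of_int (sign \<sigma>) * b \<sigma> m) = (\<lambda>_. 1)"
    by (rule Psi_inj[OF bndD bnd_const]) (use hd hd2 eps_Psi in simp)
  hence one: "(\<Sum>\<sigma>\<in>P. of_int (sign \<sigma>) * b \<sigma> m) = 1" for m by (rule fun_cong)
  have detX: "Determinant.det (X m) = 1" for m
  proof -
    have Peq: "{p. p permutes {0..<k}} = P" unfolding P_def by (simp add: atLeast0LessThan)
    have "Determinant.det (X m) = (\<Sum>\<sigma>\<in>P. of_int (sign \<sigma>) * b \<sigma> m)"
      unfolding det_def'[OF Xc[of m]] Peq by (rule sum.cong[OF refl]) (simp add: bdet)
    thus ?thesis using one[of m] by simp
  qed
  obtain W D where vW: "validW k W" and WD: "\<And>A. A \<in> carrier_mat k k \<Longrightarrow> mb k A C \<Longrightarrow> Determinant.det A = 1 \<Longrightarrow>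
     (\<exists>cs. length cs = length W \<and> (\<forall>c\<in>set cs. cmod c \<le> D) \<and> A = elemW k W cs)"
    using CL[of k C] by blast
  have "\<forall>m. \<exists>cs. length cs = length W \<and> (\<forall>c\<in>set cs. cmod c \<le> D) \<and> X m = elemW k W cs"
    using WD[OF Xc mbX detX] by blast
  from choice[OF this] obtain cs where "\<forall>m. length (cs m) = length W \<and> (\<forall>c\<in>set (cs m). cmod c \<le> D) \<and> X m = elemW k W (cs m)"
    by blast
  hence cs: "\<And>m. length (cs m) = length W" "\<And>m. \<forall>c\<in>set (cs m). cmod c \<le> D"
    "\<And>m. X m = elemW k W (cs m)" by auto
  define \<alpha>s where "\<alpha>s = map (\<lambda>t m. cs m ! t) [0..<length W]"
  have las: "length \<alpha>s = length W" unfolding \<alpha>s_def by simp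
  have csb: "cmod (cs m ! t) \<le> D" if "t < length W" for t m
    using cs(2)[of m] nth_mem[of t "cs m"] cs(1)[of m] that by auto
  have bas: "\<forall>\<alpha>\<in>set \<alpha>s. bnd \<alpha>"
  proof
    fix \<alpha> assume "\<alpha> \<in> set \<alpha>s"
    then obtain t where t: "t < length W" "\<alpha> = (\<lambda>m. cs m ! t)" unfolding \<alpha>s_def by auto
    show "bnd \<alpha>" unfolding bnd_def t(2) using csb[OF t(1)] by blast
  qed
  have mas: "map (\<lambda>\<alpha>. \<alpha> m) \<alpha>s = cs m" for m
    unfolding \<alpha>s_def using map_nth[of "cs m"] cs(1)[of m] by (simp add: o_def)
  define Gs where "Gs = map (\<lambda>((i,j),\<alpha>). Gmat p i j \<alpha>) (zip W \<alpha>s)"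
  have ag: "agree k (foldr (matmul p k) Gs (idmat p)) (lift p X)"
    using foldr_agree[OF vW las bas] unfolding Gs_def mas cs(3)[symmetric] by simp
  have elem: "\<forall>G\<in>set Gs. elementary p k G"
  proof
    fix G assume "G \<in> set Gs"
    then obtain i j \<alpha> where ij: "((i,j),\<alpha>) \<in> set (zip W \<alpha>s)" and G: "G = Gmat p i j \<alpha>"
      unfolding Gs_def by auto
    have "(i,j) \<in> set W" "\<alpha> \<in> set \<alpha>s" using set_zip_leftD[OF ij] set_zip_rightD[OF ij] by auto
    hence v: "i < k" "j < k" "i \<noteq> j" "Psi p \<alpha> \<in> Ap p" using vW bas Psi_Ap unfolding validW_def by auto
    show "elementary p k G" unfolding elementary_def G Gmat_def using v by blast
  qed
  have "\<forall>a<k. \<forall>b<k. foldr (matmul p k) Gs (idmat p) a b = M a b"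
  proof (intro allI impI)
    fix a b assume ab: "a < k" "b < k"
    have "foldr (matmul p k) Gs (idmat p) a b = Psi p (\<lambda>m. X m $$ (a,b))"
      using ag ab unfolding agree_def lift_def by auto
    also have "(\<lambda>m. X m $$ (a,b)) = Phi p (M a b)" using Xi ab by auto
    also have "Psi p (Phi p (M a b)) = M a b" by (rule Psi_Phi[OF ent[OF ab]])
    finally show "foldr (matmul p k) Gs (idmat p) a b = M a b" .
  qed
  thus ?thesis unfolding in_E_def using elem by blast
qed

end

theorem mainTheorem19:
  fixes p :: "nat \<Rightarrow> real" and k :: nat and M :: mat
  assumes "\<And>n. p n > 0"
    and "filterlim (\<lambda>n. root n (p n)) at_top sequentially"
    and "M \<in> SL p k"
  shows "in_E p k M"
proof -
  interpret PP p using assms(1,2) by unfold_locales auto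
  show ?thesis by (rule main_PP[OF assms(3)])
qed


end
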